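(* Let $(\mathcal A,\le_{\mathcal A},\vee,\wedge,\bot,\top)$ be a complete lattice with monotone maps $\alpha:\mathcal Q\to\mathcal A$ and $\gamma:\mathcal A\to\mathcal Q$ forming a Galois embedding. Then the following are equivalent: (1) $\mathcal A$ is a well-structured abstract domain; (2) for every $a\in\mathcal A$, every family $\rho_i\in\mathcal D(\mathcal H_V)$ and reals $x_i>0$ ($i=1,2,\dots$) with $\sum_i x_i\rho_i\in\mathcal D(\mathcal H_V)$: $\sum_i x_i\rho_i\in\gamma(a)$ iff $\rho_i\in\gamma(a)$ for all $i$; (3) for every $a\in\mathcal A$, the set $\gamma(a)\subseteq\mathcal D(\mathcal H_V)$ is (i) convex; (ii) an $\omega$-cpo: if $\rho_i\in\gamma(a)$ and $\rho_i\sqsubseteq\rho_{i+1}$ for all $i\ge1$ then $\bigsqcup_i\rho_i\in\gamma(a)$; (iii) down-closed: $\rho\sqsubseteq\sigma$ and $\sigma\in\gamma(a)$ imply $\rho\in\gamma(a)$; (iv) closed under positive scalar multiplication: if $\rho\in\gamma(a)$, $x>0$ and $x\rho\in\mathcal D(\mathcal H_V)$ then $x\rho\in\gamma(a)$.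
   Context: Fix a finite set $V$ of quantum variables, each a qubit with state space $\mathcal H_q\cong\mathbb C^2$; $\mathcal H_V=\bigotimes_{q\in V}\mathcal H_q$. $\mathcal D(\mathcal H_V)$ is the set of partial density operators on $\mathcal H_V$ (positive operators of trace at most $1$), ordered by the Löwner order $\sqsubseteq$ ($A\sqsubseteq B$ iff $B-A$ is positive); $\bigsqcup$ denotes least upper bound in this order. The concrete domain is $\mathcal Q=2^{\mathcal D(\mathcal H_V)}$ ordered by inclusion. For posets $C,A$ and monotone $\alpha:C\to A$, $\gamma:A\to C$, $(\alpha,\gamma)$ is a Galois connection if $c\le_C\gamma(a)\iff\alpha(c)\le_A a$ for all $c,a$, and a Galois embedding if moreover $\alpha\circ\gamma=\mathrm{id}_A$. A complete lattice $(\mathcal A,\le_{\mathcal A},\vee,\wedge,\bot,\top)$ with monotone $\alpha:\mathcal Q\to\mathcal A$, $\gamma:\mathcal A\to\mathcal Q$ is a well-structured abstract domain if (a) $(\alpha,\gamma)$ is a Galois embedding, and (b) for any family $\rho_i\in\mathcal D(\mathcal H_V)$ and reals $x_i>0$ ($i=1,2,\dots$) with $\sum_i x_i\rho_i\in\mathcal D(\mathcal H_V)$, $\alpha(\sum_i x_i\rho_i)=\bigvee_i\alpha(\rho_i)$, where $\alpha(\rho)$ abbreviates $\alpha(\{\rho\})$. *)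

theory Defs
  imports "HOL-Analysis.Analysis"
begin

text \<open>Quantum variables: a finite type 'v of qubits. The computational basis of
  H_V = tensor of C^2 over V is indexed by assignments 'v \<Rightarrow> bool, so operators
  on H_V are complex matrices indexed by ('v \<Rightarrow> bool).\<close>

type_synonym 'v qop = "complex ^ ('v \<Rightarrow> bool) ^ ('v \<Rightarrow> bool)"

definition psd :: "complex ^ 'n ^ 'n \<Rightarrow> bool" where
  "psd A \<longleftrightarrow> (\<forall>v :: complex ^ 'n.
     Im (\<Sum>i\<in>UNIV. cnj (v $ i) * (A *v v) $ i) = 0 \<and>
     Re (\<Sum>i\<in>UNIV. cnj (v $ i) * (A *v v) $ i) \<ge> 0)"

definition mtrace :: "complex ^ 'n ^ 'n \<Rightarrow> complex" where
  "mtrace A = (\<Sum>i\<in>UNIV. A $ i $ i)"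

definition pdo :: "complex ^ 'n ^ 'n \<Rightarrow> bool" where
  "pdo A \<longleftrightarrow> psd A \<and> Re (mtrace A) \<le> 1"

definition PDO :: "('v::finite) qop set" where
  "PDO = {A. pdo A}"

definition lowner :: "complex ^ 'n ^ 'n \<Rightarrow> complex ^ 'n ^ 'n \<Rightarrow> bool" where
  "lowner A B \<longleftrightarrow> psd (B - A)"

definition is_lowner_lub :: "(nat \<Rightarrow> ('v::finite) qop) \<Rightarrow> 'v qop \<Rightarrow> bool" where
  "is_lowner_lub \<rho> \<sigma> \<longleftrightarrow> \<sigma> \<in> PDO \<and> (\<forall>i. lowner (\<rho> i) \<sigma>) \<and>
     (\<forall>\<tau>\<in>PDO. (\<forall>i. lowner (\<rho> i) \<tau>) \<longrightarrow> lowner \<sigma> \<tau>)"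

text \<open>The concrete domain Q = 2^{D(H_V)} consists of the sets S \<subseteq> PDO.\<close>

definition galois_connection ::
  "(('v::finite) qop set \<Rightarrow> 'a::order) \<Rightarrow> ('a \<Rightarrow> 'v qop set) \<Rightarrow> bool" where
  "galois_connection \<alpha> \<gamma> \<longleftrightarrow>
     (\<forall>c a. c \<subseteq> PDO \<longrightarrow> (c \<subseteq> \<gamma> a \<longleftrightarrow> \<alpha> c \<le> a))"

definition galois_embedding ::
  "(('v::finite) qop set \<Rightarrow> 'a::order) \<Rightarrow> ('a \<Rightarrow> 'v qop set) \<Rightarrow> bool" where
  "galois_embedding \<alpha> \<gamma> \<longleftrightarrow> galois_connection \<alpha> \<gamma> \<and> (\<forall>a. \<alpha> (\<gamma> a) = a)"

definition admissible_family ::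
  "nat set \<Rightarrow> (nat \<Rightarrow> real) \<Rightarrow> (nat \<Rightarrow> ('v::finite) qop) \<Rightarrow> 'v qop \<Rightarrow> bool" where
  "admissible_family I x \<rho> \<sigma> \<longleftrightarrow> I \<noteq> {} \<and> (\<forall>i\<in>I. \<rho> i \<in> PDO \<and> x i > 0) \<and>
     ((\<lambda>i. x i *\<^sub>R \<rho> i) has_sum \<sigma>) I \<and> \<sigma> \<in> PDO"

definition well_structured ::
  "(('v::finite) qop set \<Rightarrow> 'a::complete_lattice) \<Rightarrow> ('a \<Rightarrow> 'v qop set) \<Rightarrow> bool" where
  "well_structured \<alpha> \<gamma> \<longleftrightarrow> galois_embedding \<alpha> \<gamma> \<and>
     (\<forall>I x \<rho> \<sigma>. admissible_family I x \<rho> \<sigma> \<longrightarrow> \<alpha> {\<sigma>} = (SUP i\<in>I. \<alpha> {\<rho> i}))"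

definition omega_cpo :: "('v::finite) qop set \<Rightarrow> bool" where
  "omega_cpo S \<longleftrightarrow> (\<forall>\<rho> \<sigma>. (\<forall>i. \<rho> i \<in> S) \<and> (\<forall>i. lowner (\<rho> i) (\<rho> (Suc i))) \<and>
     is_lowner_lub \<rho> \<sigma> \<longrightarrow> \<sigma> \<in> S)"

definition down_closed :: "('v::finite) qop set \<Rightarrow> bool" where
  "down_closed S \<longleftrightarrow> (\<forall>\<rho> \<sigma>. \<rho> \<in> PDO \<and> lowner \<rho> \<sigma> \<and> \<sigma> \<in> S \<longrightarrow> \<rho> \<in> S)"

definition scalar_closed :: "('v::finite) qop set \<Rightarrow> bool" where
  "scalar_closed S \<longleftrightarrow> (\<forall>\<rho> x. \<rho> \<in> S \<and> x > 0 \<and> x *\<^sub>R \<rho> \<in> PDO \<longrightarrow> x *\<^sub>R \<rho> \<in> S)"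

end

theory Submission
  imports Defs
begin

definition qf :: "complex ^ 'n ^ 'n \<Rightarrow> complex ^ 'n \<Rightarrow> complex" where
  "qf A v = (\<Sum>i\<in>UNIV. cnj (v $ i) * (A *v v) $ i)"

lemma psd_qf: "psd A \<longleftrightarrow> (\<forall>v. Im (qf A v) = 0 \<and> Re (qf A v) \<ge> 0)"
  unfolding psd_def qf_def ..

lemma qf_add: "qf (A + B) v = qf A v + qf B v"
  unfolding qf_def by (simp add: matrix_vector_mult_def sum.distrib algebra_simps sum_distrib_left)

lemma qf_diff: "qf (A - B) v = qf A v - qf B v"
  unfolding qf_def by (simp add: matrix_vector_mult_def sum_subtractf algebra_simps sum_distrib_left)

lemma qf_scaleR: "qf (c *\<^sub>R A) v = of_real c * qf A v"
  unfolding qf_def unfolding matrix_vector_mult_def vector_scaleR_component by (simp add: algebra_simps sum_distrib_left scaleR_conv_of_real)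

lemma qf_zero: "qf 0 v = 0"
  unfolding qf_def by (simp add: matrix_vector_mult_def)

lemma qf_axis: "qf A (axis j 1) = A $ j $ j"
  unfolding qf_def by (simp add: matrix_vector_mult_def axis_def if_distrib if_distribR cong: if_cong)

lemma qf_two:
  fixes A :: "complex^'n^'n"
  assumes "j \<noteq> k"
  shows "qf A (\<chi> l. if l = j then a else if l = k then b else 0) =
    cnj a * A$j$j * a + cnj a * A$j$k * b + cnj b * A$k$j * a + cnj b * A$k$k * b"
proof -
  let ?v = "(\<chi> l. if l = j then a else if l = k then b else 0) :: complex ^ 'n"
  have "qf A ?v = (\<Sum>i\<in>{j,k}. cnj (?v $ i) * (A *v ?v) $ i)"
    unfolding qf_def by (rule sum.mono_neutral_right) auto
  also have "\<dots> = cnj a * (A *v ?v) $ j + cnj b * (A *v ?v) $ k"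
    using assms by simp
  also have "(A *v ?v) $ j = (\<Sum>l\<in>{j,k}. A $ j $ l * ?v $ l)"
    unfolding matrix_vector_mult_def by simp (rule sum.mono_neutral_right, auto)
  also have "(A *v ?v) $ k = (\<Sum>l\<in>{j,k}. A $ k $ l * ?v $ l)"
    unfolding matrix_vector_mult_def by simp (rule sum.mono_neutral_right, auto)
  finally show ?thesis using assms by (simp add: algebra_simps)
qed

lemma tendsto_qf: "(f \<longlongrightarrow> L) F \<Longrightarrow> ((\<lambda>n. qf (f n) v) \<longlongrightarrow> qf L v) F"
  unfolding qf_def matrix_vector_mult_def by (auto intro!: tendsto_intros)
lemma psd_add: "psd A \<Longrightarrow> psd B \<Longrightarrow> psd (A + B)"
  unfolding psd_qf qf_add by simp

lemma psd_scaleR: "psd A \<Longrightarrow> c \<ge> 0 \<Longrightarrow> psd (c *\<^sub>R A)"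
  unfolding psd_qf qf_scaleR by simp

lemma psd_zero: "psd 0"
  unfolding psd_qf qf_zero by simp

lemma psd_sum: "finite S \<Longrightarrow> (\<And>i. i \<in> S \<Longrightarrow> psd (f i)) \<Longrightarrow> psd (sum f S)"
  by (induction S rule: finite_induct) (auto intro: psd_add psd_zero)

lemma lowner_trans: "lowner A B \<Longrightarrow> lowner B C \<Longrightarrow> lowner A C"
  unfolding lowner_def using psd_add[of "C - B" "B - A"] by simp

lemma lowner_refl: "lowner A A"
  unfolding lowner_def by (simp add: psd_zero)

lemma lowner_chain:
  assumes "\<And>n. lowner (f n) (f (Suc n))" "n \<le> m"
  shows "lowner (f n) (f m)"
  using assms(2)
proof (induction m rule: dec_induct)
  case base then show ?case by (rule lowner_refl)
next
  case (step m) then show ?case using assms(1) lowner_trans by blast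
qed

lemma psd_diag: "psd A \<Longrightarrow> Im (A$j$j) = 0 \<and> Re (A$j$j) \<ge> 0"
  unfolding psd_qf by (metis qf_axis)

lemma mtrace_add: "mtrace (A + B) = mtrace A + mtrace B"
  unfolding mtrace_def by (simp add: sum.distrib)

lemma mtrace_diff: "mtrace (A - B) = mtrace A - mtrace B"
  unfolding mtrace_def by (simp add: sum_subtractf)

lemma mtrace_scaleR: "mtrace (c *\<^sub>R A) = of_real c * mtrace A"
  unfolding mtrace_def vector_scaleR_component by (simp add: sum_distrib_left scaleR_conv_of_real)

lemma mtrace_zero: "mtrace 0 = 0"
  unfolding mtrace_def by simp

lemma psd_trace: "psd A \<Longrightarrow> Re (mtrace A) \<ge> 0"
  unfolding mtrace_def by (simp add: sum_nonneg psd_diag)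

lemma psd_diag_le_trace: "psd A \<Longrightarrow> Re (A$j$j) \<le> Re (mtrace A)"
  unfolding mtrace_def Re_sum by (rule member_le_sum) (auto simp: psd_diag)

lemma psd_two_diag_le_trace:
  fixes A :: "complex^'n^'n"
  assumes "psd A" "j \<noteq> k"
  shows "Re (A$j$j) + Re (A$k$k) \<le> Re (mtrace A)"
proof -
  have "Re (A$j$j) + Re (A$k$k) = (\<Sum>i\<in>{j,k}. Re (A$i$i))" using assms(2) by simp
  also have "\<dots> \<le> (\<Sum>i\<in>UNIV. Re (A$i$i))"
    by (rule sum_mono2) (auto simp: psd_diag assms(1))
  finally show ?thesis unfolding mtrace_def Re_sum .
qed

lemma real_pair_bound:
  fixes p1 p2 :: complex and D :: real
  assumes "Im p1 = 0" "Im p2 = 0" "Re p1 \<ge> 0" "Re p2 \<ge> 0" "p1 + p2 = 2 * of_real D"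
  shows "cmod (p1 - p2) \<le> 2 * D"
proof -
  have e: "p1 - p2 = complex_of_real (Re p1 - Re p2)" using assms by (simp add: complex_eq_iff)
  have n: "cmod (p1 - p2) = \<bar>Re p1 - Re p2\<bar>" unfolding e norm_of_real ..
  have "Re p1 + Re p2 = 2 * D" using arg_cong[OF assms(5), of Re] by simp
  then show ?thesis unfolding n using assms by (simp add: abs_le_iff)
qed

lemma psd_entry_bound:
  fixes A :: "complex^'n^'n"
  assumes "psd A"
  shows "cmod (A$j$k) \<le> Re (mtrace A)"
proof (cases "j = k")
  case True
  then show ?thesis using psd_diag[OF assms, of j] psd_diag_le_trace[OF assms, of j]
    by (simp add: cmod_eq_Re)
next
  case False
  define D where "D = Re (A$j$j) + Re (A$k$k)"
  have ajj: "A$j$j = of_real (Re (A$j$j))" using psd_diag[OF assms, of j] by (simp add: complex_eq_iff)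
  have akk: "A$k$k = of_real (Re (A$k$k))" using psd_diag[OF assms, of k] by (simp add: complex_eq_iff)
  define p where "p = (\<lambda>b. qf A (\<chi> l. if l = j then 1 else if l = k then b else 0))"
  have pv: "p b = A$j$j + A$j$k * b + cnj b * A$k$j + cnj b * A$k$k * b" for b
    unfolding p_def qf_two[OF False] by simp
  have pp: "Im (p b) = 0 \<and> Re (p b) \<ge> 0" for b
    using assms unfolding psd_qf p_def by blast
  have q1: "p 1 = A$j$j + A$j$k + A$k$j + A$k$k" unfolding pv by simp
  have q2: "p (-1) = A$j$j - A$j$k - A$k$j + A$k$k" unfolding pv by simp
  have q3: "p \<i> = A$j$j + \<i> * A$j$k - \<i> * A$k$j + A$k$k" unfolding pv by (simp add: mult.commute)
  have q4: "p (-\<i>) = A$j$j - \<i> * A$j$k + \<i> * A$k$j + A$k$k" unfolding pv by (simp add: mult.commute)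
  have Dc: "A$j$j + A$k$k = of_real D" unfolding D_def by (subst ajj, subst akk) simp
  have s1: "p 1 + p (-1) = 2 * of_real D"
    unfolding q1 q2 Dc[symmetric] by simp
  have s2: "p \<i> + p (-\<i>) = 2 * of_real D"
    unfolding q3 q4 Dc[symmetric] by simp
  have d1: "p 1 - p (-1) = 2 * (A$j$k + A$k$j)" unfolding q1 q2 by simp
  have d2: "p \<i> - p (-\<i>) = 2 * \<i> * (A$j$k - A$k$j)" unfolding q3 q4 by (simp add: right_diff_distrib)
  have "cmod (2 * (A$j$k + A$k$j)) \<le> 2 * D"
    using real_pair_bound[OF conjunct1[OF pp] conjunct1[OF pp] conjunct2[OF pp] conjunct2[OF pp] s1]
    unfolding d1 .
  then have b1: "cmod (A$j$k + A$k$j) \<le> D" by (simp only: norm_mult) simp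
  have "cmod (2 * \<i> * (A$j$k - A$k$j)) \<le> 2 * D"
    using real_pair_bound[OF conjunct1[OF pp] conjunct1[OF pp] conjunct2[OF pp] conjunct2[OF pp] s2]
    unfolding d2 .
  then have b2: "cmod (A$j$k - A$k$j) \<le> D" by (simp only: norm_mult) simp
  have "2 * A$j$k = (A$j$k + A$k$j) + (A$j$k - A$k$j)" by simp
  then have "cmod (2 * A$j$k) \<le> 2 * D"
    by (metis b1 b2 add_mono mult_2 norm_triangle_le)
  then have "cmod (A$j$k) \<le> D" by (simp add: norm_mult)
  then show ?thesis using psd_two_diag_le_trace[OF assms False] unfolding D_def by linarith
qed

lemma norm_vec_le_sum: "norm (x :: 'b::real_normed_vector ^ 'n) \<le> (\<Sum>i\<in>UNIV. norm (x $ i))"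
  unfolding norm_vec_def by (rule L2_set_le_sum) simp

lemma psd_norm_bound:
  fixes A :: "complex^'n^'n"
  assumes "psd A"
  shows "norm A \<le> of_nat (CARD('n) * CARD('n)) * Re (mtrace A)"
proof -
  have "norm A \<le> (\<Sum>i\<in>UNIV. norm (A $ i))" by (rule norm_vec_le_sum)
  also have "\<dots> \<le> (\<Sum>i\<in>(UNIV::'n set). \<Sum>l\<in>(UNIV::'n set). Re (mtrace A))"
  proof (rule sum_mono)
    fix i
    have "norm (A $ i) \<le> (\<Sum>l\<in>UNIV. norm (A $ i $ l))" by (rule norm_vec_le_sum)
    also have "\<dots> \<le> (\<Sum>l\<in>(UNIV::'n set). Re (mtrace A))"
      by (rule sum_mono) (simp add: psd_entry_bound assms)
    finally show "norm (A $ i) \<le> (\<Sum>l\<in>(UNIV::'n set). Re (mtrace A))" .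
  qed
  also have "\<dots> = of_nat (CARD('n) * CARD('n)) * Re (mtrace A)" by simp
  finally show ?thesis .
qed

lemma psd_antisym:
  fixes A :: "complex^'n^'n"
  assumes "psd A" "psd (- A)"
  shows "A = 0"
proof -
  have "mtrace (-A) = - mtrace A" using mtrace_diff[of 0 A] by (simp add: mtrace_zero)
  then have "Re (mtrace A) = 0" using psd_trace[OF assms(1)] psd_trace[OF assms(2)] by simp
  then have "norm A \<le> 0" using psd_norm_bound[OF assms(1)] by simp
  then show ?thesis by simp
qed

lemma lowner_antisym: "lowner A B \<Longrightarrow> lowner B A \<Longrightarrow> A = B"
  unfolding lowner_def using psd_antisym[of "B - A"] by simp

lemma psd_limit:
  assumes "(f \<longlongrightarrow> L) sequentially" "\<forall>\<^sub>F n in sequentially. psd (f n)"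
  shows "psd L"
  unfolding psd_qf
proof
  fix v
  have t: "((\<lambda>n. qf (f n) v) \<longlongrightarrow> qf L v) sequentially" by (rule tendsto_qf[OF assms(1)])
  have "((\<lambda>n. Im (qf (f n) v)) \<longlongrightarrow> Im (qf L v)) sequentially" by (intro tendsto_intros t)
  moreover have "\<forall>\<^sub>F n in sequentially. Im (qf (f n) v) = 0"
    using assms(2) by eventually_elim (simp add: psd_qf)
  then have "((\<lambda>n. Im (qf (f n) v)) \<longlongrightarrow> 0) sequentially" by (rule tendsto_eventually)
  ultimately have 1: "Im (qf L v) = 0" by (rule LIMSEQ_unique)
  have "((\<lambda>n. Re (qf (f n) v)) \<longlongrightarrow> Re (qf L v)) sequentially" by (intro tendsto_intros t)
  moreover have "\<forall>\<^sub>F n in sequentially. Re (qf (f n) v) \<ge> 0"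
    using assms(2) by eventually_elim (simp add: psd_qf)
  ultimately have 2: "Re (qf L v) \<ge> 0" by (rule tendsto_lowerbound) simp
  show "Im (qf L v) = 0 \<and> 0 \<le> Re (qf L v)" using 1 2 by simp
qed

lemma pdo_iff: "A \<in> PDO \<longleftrightarrow> psd A \<and> Re (mtrace A) \<le> 1"
  by (simp add: PDO_def pdo_def)

lemma mtrace_sum: "mtrace (sum f S) = (\<Sum>k\<in>S. mtrace (f k))"
  unfolding mtrace_def sum_component by (rule sum.swap)

lemma lowner_limit:
  assumes "(f \<longlongrightarrow> L) sequentially" "\<forall>\<^sub>F n in sequentially. lowner A (f n)"
  shows "lowner A L"
  unfolding lowner_def
  by (rule psd_limit[of "\<lambda>n. f n - A"]) (use assms in \<open>auto intro: tendsto_intros simp: lowner_def\<close>)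

lemma lowner_limit2:
  assumes "(f \<longlongrightarrow> L) sequentially" "\<forall>\<^sub>F n in sequentially. lowner (f n) B"
  shows "lowner L B"
  unfolding lowner_def
  by (rule psd_limit[of "\<lambda>n. B - f n"]) (use assms in \<open>auto intro: tendsto_intros simp: lowner_def\<close>)

lemma lowner_trace: "lowner A B \<Longrightarrow> Re (mtrace A) \<le> Re (mtrace B)"
  unfolding lowner_def using psd_trace[of "B - A"] by (simp add: mtrace_diff)

lemma mono_seq_conv:
  fixes \<rho> :: "nat \<Rightarrow> ('v::finite) qop"
  assumes pdo: "\<And>n. \<rho> n \<in> PDO" and ch: "\<And>n. lowner (\<rho> n) (\<rho> (Suc n))"
  defines "d \<equiv> \<lambda>i. if i = 0 then \<rho> 0 else \<rho> i - \<rho> (i - 1)"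
  shows "\<exists>L. \<rho> \<longlonglongrightarrow> L \<and> (d has_sum L) UNIV"
proof -
  have psd_d: "psd (d i)" for i
    using pdo ch unfolding d_def lowner_def pdo_iff by (cases i) auto
  have part: "(\<Sum>i<Suc n. d i) = \<rho> n" for n
    by (induction n) (simp_all add: d_def)
  define t where "t i = Re (mtrace (d i))" for i
  have t0: "t i \<ge> 0" for i unfolding t_def by (rule psd_trace[OF psd_d])
  have tsum: "(\<Sum>k\<le>n. t k) \<le> 1" for n
  proof -
    have "(\<Sum>k\<le>n. t k) = Re (mtrace (\<Sum>i<Suc n. d i))"
      unfolding t_def mtrace_sum Re_sum lessThan_Suc_atMost ..
    also have "\<dots> \<le> 1" unfolding part using pdo[of n] by (simp add: pdo_iff)
    finally show ?thesis .
  qed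
  have "summable t" by (rule bounded_imp_summable[where B=1]) (use t0 tsum in auto)
  then have st: "summable (\<lambda>i. of_nat (CARD('v \<Rightarrow> bool) * CARD('v \<Rightarrow> bool)) * t i)"
    by (rule summable_mult)
  have ns: "summable (\<lambda>i. norm (d i))"
    by (rule summable_comparison_test'[OF st, of 0]) (use psd_norm_bound[OF psd_d] in \<open>simp add: t_def\<close>)
  then have "summable d" by (rule summable_norm_cancel)
  then have sm: "d sums suminf d" by (rule summable_sums)
  then have hs: "(d has_sum suminf d) UNIV" by (rule norm_summable_imp_has_sum[OF ns])
  have "(\<lambda>n. \<Sum>i<n. d i) \<longlonglongrightarrow> suminf d" using sm unfolding sums_def .
  then have "(\<lambda>n. \<Sum>i<Suc n. d i) \<longlonglongrightarrow> suminf d" by (rule LIMSEQ_Suc)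
  then have "\<rho> \<longlonglongrightarrow> suminf d" unfolding part .
  then show ?thesis using hs by blast
qed

lemma lub_eq_limit:
  fixes \<rho> :: "nat \<Rightarrow> ('v::finite) qop"
  assumes pdo: "\<And>n. \<rho> n \<in> PDO" and ch: "\<And>n. lowner (\<rho> n) (\<rho> (Suc n))"
    and lub: "is_lowner_lub \<rho> \<sigma>" and lim: "\<rho> \<longlonglongrightarrow> L"
  shows "\<sigma> = L"
proof -
  have up: "lowner (\<rho> n) L" for n
    by (rule lowner_limit[OF lim]) (use lowner_chain[of \<rho>, OF ch] in \<open>auto simp: eventually_sequentially\<close>)
  have psdL: "psd L" by (rule psd_limit[OF lim]) (use pdo in \<open>auto simp: pdo_iff\<close>)
  have Ls: "lowner L \<sigma>" by (rule lowner_limit2[OF lim]) (use lub in \<open>auto simp: is_lowner_lub_def\<close>)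
  have sP: "\<sigma> \<in> PDO" using lub by (simp add: is_lowner_lub_def)
  have "L \<in> PDO" using psdL lowner_trace[OF Ls] sP by (simp add: pdo_iff)
  then have "lowner \<sigma> L" using lub up by (simp add: is_lowner_lub_def)
  then show ?thesis using Ls by (rule lowner_antisym)
qed

lemma family_seq:
  fixes \<rho> :: "nat \<Rightarrow> ('v::finite) qop"
  assumes adm: "admissible_family I x \<rho> \<sigma>"
  defines "g \<equiv> \<lambda>i. if i \<in> I then x i *\<^sub>R \<rho> i else 0"
  defines "S \<equiv> \<lambda>n. \<Sum>i<n. g i"
  shows "S \<longlonglongrightarrow> \<sigma>" "\<And>n. lowner (S n) (S (Suc n))" "\<And>n. S n \<in> PDO"
    "is_lowner_lub S \<sigma>" "\<And>i. i \<in> I \<Longrightarrow> lowner (x i *\<^sub>R \<rho> i) \<sigma>"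
proof -
  have fam: "\<And>i. i \<in> I \<Longrightarrow> \<rho> i \<in> PDO \<and> x i > 0" and hs: "((\<lambda>i. x i *\<^sub>R \<rho> i) has_sum \<sigma>) I"
    and sP: "\<sigma> \<in> PDO"
    using adm unfolding admissible_family_def by auto
  have pg: "psd (g i)" for i
    using fam[of i] by (auto simp: g_def pdo_iff psd_zero intro: psd_scaleR)
  have "(g has_sum \<sigma>) UNIV"
    using hs has_sum_cong_neutral[where f="\<lambda>i. x i *\<^sub>R \<rho> i" and g=g and S=I and T=UNIV] by (simp add: g_def)
  then have "g sums \<sigma>" by (rule has_sum_imp_sums)
  then show lim: "S \<longlonglongrightarrow> \<sigma>" unfolding sums_def S_def .
  show ch: "lowner (S n) (S (Suc n))" for n
    unfolding lowner_def S_def using pg[of n] by simp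
  have up: "lowner (S n) \<sigma>" for n
    by (rule lowner_limit[OF lim]) (use lowner_chain[of S, OF ch] in \<open>auto simp: eventually_sequentially\<close>)
  show SP: "S n \<in> PDO" for n
  proof -
    have "psd (S n)" unfolding S_def by (rule psd_sum) (auto simp: pg)
    then show ?thesis using lowner_trace[OF up[of n]] sP by (simp add: pdo_iff)
  qed
  show "is_lowner_lub S \<sigma>"
    unfolding is_lowner_lub_def
  proof (intro conjI ballI allI impI)
    show "\<sigma> \<in> PDO" by (rule sP)
    show "lowner (S i) \<sigma>" for i by (rule up)
    fix \<tau> assume "\<tau> \<in> PDO" "\<forall>i. lowner (S i) \<tau>"
    then show "lowner \<sigma> \<tau>" by (intro lowner_limit2[OF lim]) auto
  qed
  show "lowner (x i *\<^sub>R \<rho> i) \<sigma>" if "i \<in> I" for i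
  proof -
    have "lowner (g i) (S (Suc i))"
      unfolding lowner_def S_def by simp (rule psd_sum, auto simp: pg)
    then show ?thesis using up[of "Suc i"] lowner_trans that by (simp add: g_def)
  qed
qed

lemma adm_two:
  fixes A B :: "('v::finite) qop"
  assumes "A \<in> PDO" "B \<in> PDO" "u > 0" "v > 0" "S = u *\<^sub>R A + v *\<^sub>R B" "S \<in> PDO"
  shows "admissible_family {0,1} (\<lambda>i. if i = 0 then u else v) (\<lambda>i. if i = (0::nat) then A else B) S"
  unfolding admissible_family_def using assms by (auto intro!: has_sum_finiteI)

lemma adm_one:
  fixes A :: "('v::finite) qop"
  assumes "A \<in> PDO" "u > 0" "u *\<^sub>R A \<in> PDO"
  shows "admissible_family {0} (\<lambda>i. u) (\<lambda>i. A) (u *\<^sub>R A)"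
  unfolding admissible_family_def using assms by (auto intro!: has_sum_finiteI)

lemma P2_imp_P3:
  fixes G :: "('v::finite) qop set"
  assumes GP: "G \<subseteq> PDO"
    and P2: "\<And>I x \<rho> \<sigma>. admissible_family I x \<rho> \<sigma> \<Longrightarrow> (\<sigma> \<in> G \<longleftrightarrow> (\<forall>i\<in>I. \<rho> i \<in> G))"
  shows "convex G \<and> omega_cpo G \<and> down_closed G \<and> scalar_closed G"
proof (intro conjI)
  show dc: "down_closed G"
    unfolding down_closed_def
  proof (intro allI impI, elim conjE)
    fix \<rho> \<sigma> assume r: "\<rho> \<in> PDO" "lowner \<rho> \<sigma>" "\<sigma> \<in> G"
    have sP: "\<sigma> \<in> PDO" using r GP by auto
    have "\<sigma> - \<rho> \<in> PDO"
      using r sP psd_trace[of \<rho>] by (auto simp: pdo_iff lowner_def mtrace_diff)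
    then have "admissible_family {0,1} (\<lambda>i. if i = 0 then 1 else 1) (\<lambda>i. if i = (0::nat) then \<rho> else \<sigma> - \<rho>) \<sigma>"
      using r sP by (intro adm_two) auto
    from P2[OF this] r show "\<rho> \<in> G" by auto
  qed
  show "scalar_closed G"
    unfolding scalar_closed_def
  proof (intro allI impI, elim conjE)
    fix \<rho> c assume r: "\<rho> \<in> G" "(0::real) < c" "c *\<^sub>R \<rho> \<in> PDO"
    have "admissible_family {0} (\<lambda>i. c) (\<lambda>i. \<rho>) (c *\<^sub>R \<rho>)"
      using r GP by (intro adm_one) auto
    from P2[OF this] r show "c *\<^sub>R \<rho> \<in> G" by auto
  qed
  show "convex G"
    unfolding convex_def
  proof (intro ballI allI impI)
    fix A B u v assume r: "A \<in> G" "B \<in> G" "(0::real) \<le> u" "0 \<le> v" "u + v = 1"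
    show "u *\<^sub>R A + v *\<^sub>R B \<in> G"
    proof (cases "u = 0 \<or> v = 0")
      case True then show ?thesis using r by auto
    next
      case False
      then have uv: "u > 0" "v > 0" using r by auto
      have AP: "A \<in> PDO" "B \<in> PDO" using r GP by auto
      have tr: "Re (mtrace (u *\<^sub>R A + v *\<^sub>R B)) = u * Re (mtrace A) + v * Re (mtrace B)"
        by (simp add: mtrace_add mtrace_scaleR)
      have "u * Re (mtrace A) \<le> u * 1" using AP r by (intro mult_left_mono) (auto simp: pdo_iff)
      moreover have "v * Re (mtrace B) \<le> v * 1" using AP r by (intro mult_left_mono) (auto simp: pdo_iff)
      ultimately have "u *\<^sub>R A + v *\<^sub>R B \<in> PDO"
        using AP r tr by (auto simp: pdo_iff intro!: psd_add psd_scaleR)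
      then have "admissible_family {0,1} (\<lambda>i. if i = 0 then u else v) (\<lambda>i. if i = (0::nat) then A else B) (u *\<^sub>R A + v *\<^sub>R B)"
        using AP uv by (intro adm_two) auto
      from P2[OF this] r show ?thesis by auto
    qed
  qed
  show "omega_cpo G"
    unfolding omega_cpo_def
  proof (intro allI impI, elim conjE)
    fix \<rho> :: "nat \<Rightarrow> 'v qop" and \<sigma>
    assume inG: "\<forall>i. \<rho> i \<in> G" and ch: "\<forall>i. lowner (\<rho> i) (\<rho> (Suc i))" and lub: "is_lowner_lub \<rho> \<sigma>"
    have pdo: "\<rho> n \<in> PDO" for n using inG GP by auto
    define d where "d = (\<lambda>i. if i = 0 then \<rho> 0 else \<rho> i - \<rho> (i - 1))"
    obtain L where L: "\<rho> \<longlonglongrightarrow> L" "(d has_sum L) UNIV"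
      using mono_seq_conv[of \<rho>] pdo ch unfolding d_def by blast
    have sL: "\<sigma> = L" using lub_eq_limit[of \<rho> \<sigma> L] pdo ch lub L by auto
    have dP: "d i \<in> PDO" for i
    proof (cases i)
      case 0 then show ?thesis using pdo by (simp add: d_def)
    next
      case (Suc j)
      have "lowner (\<rho> j) (\<rho> i)" using ch Suc by simp
      then show ?thesis using pdo[of i] pdo[of j] psd_trace[of "\<rho> j"] Suc
        by (auto simp: d_def pdo_iff lowner_def mtrace_diff)
    qed
    have dG: "d i \<in> G" for i
    proof (cases i)
      case 0 then show ?thesis using inG by (simp add: d_def)
    next
      case (Suc j)
      have "lowner (d i) (\<rho> i)" using pdo[of j] Suc by (simp add: d_def lowner_def pdo_iff)
      then show ?thesis using dc dP inG unfolding down_closed_def by blast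
    qed
    have "admissible_family UNIV (\<lambda>i. 1) d \<sigma>"
      unfolding admissible_family_def using dP L(2) sL lub by (simp add: is_lowner_lub_def)
    from P2[OF this] dG show "\<sigma> \<in> G" by auto
  qed
qed

lemma P3_imp_P2:
  fixes G :: "('v::finite) qop set"
  assumes GP: "G \<subseteq> PDO" and cv: "convex G" and oc: "omega_cpo G" and dc: "down_closed G"
    and sc: "scalar_closed G" and adm: "admissible_family I x \<rho> \<sigma>"
  shows "\<sigma> \<in> G \<longleftrightarrow> (\<forall>i\<in>I. \<rho> i \<in> G)"
proof -
  have fam: "\<And>i. i \<in> I \<Longrightarrow> \<rho> i \<in> PDO \<and> x i > 0" and sP: "\<sigma> \<in> PDO" and Ine: "I \<noteq> {}"
    using adm unfolding admissible_family_def by auto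
  define g where "g = (\<lambda>i. if i \<in> I then x i *\<^sub>R \<rho> i else 0)"
  define S where "S = (\<lambda>n. \<Sum>i<n. g i)"
  note fs = family_seq[OF adm, folded g_def, folded S_def]
  show ?thesis
  proof
    assume sG: "\<sigma> \<in> G"
    show "\<forall>i\<in>I. \<rho> i \<in> G"
    proof
      fix i assume i: "i \<in> I"
      have le: "lowner (x i *\<^sub>R \<rho> i) \<sigma>" by (rule fs(5)[OF i])
      have "psd (x i *\<^sub>R \<rho> i)" using fam[OF i] by (auto simp: pdo_iff intro: psd_scaleR)
      then have xP: "x i *\<^sub>R \<rho> i \<in> PDO" using lowner_trace[OF le] sP by (simp add: pdo_iff)
      then have "x i *\<^sub>R \<rho> i \<in> G" using dc le sG unfolding down_closed_def by blast
      moreover have "(1 / x i) *\<^sub>R (x i *\<^sub>R \<rho> i) = \<rho> i" using fam[OF i] by simp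
      moreover have "1 / x i > 0" using fam[OF i] by simp
      ultimately have "(1 / x i) *\<^sub>R (x i *\<^sub>R \<rho> i) \<in> G"
        using sc[unfolded scalar_closed_def, rule_format, of "x i *\<^sub>R \<rho> i" "1 / x i"] fam[OF i] by simp
      then show "\<rho> i \<in> G" using fam[OF i] by simp
    qed
  next
    assume all: "\<forall>i\<in>I. \<rho> i \<in> G"
    obtain i0 where i0: "i0 \<in> I" using Ine by blast
    have zG: "0 \<in> G"
    proof -
      have "(0::'v qop) \<in> PDO" by (simp add: pdo_iff psd_zero mtrace_zero)
      moreover have "lowner 0 (\<rho> i0)" using fam[OF i0] by (simp add: lowner_def pdo_iff)
      ultimately show ?thesis using dc all i0 unfolding down_closed_def by blast
    qed
    have SG: "S n \<in> G" for n
    proof -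
      define F where "F = {..<n} \<inter> I"
      have SF: "S n = (\<Sum>i\<in>F. x i *\<^sub>R \<rho> i)"
        unfolding S_def g_def F_def by (simp add: sum.inter_restrict)
      show ?thesis
      proof (cases "F = {}")
        case True then show ?thesis using SF zG by simp
      next
        case False
        have fin: "finite F" unfolding F_def by simp
        define s where "s = (\<Sum>i\<in>F. x i)"
        have xpos: "\<And>i. i \<in> F \<Longrightarrow> x i > 0" using fam unfolding F_def by auto
        have s0: "s > 0" unfolding s_def using False fin xpos by (simp add: sum_pos)
        have cG: "(\<Sum>i\<in>F. (x i / s) *\<^sub>R \<rho> i) \<in> G"
        proof (rule convex_sum[OF fin cv])
          show "(\<Sum>i\<in>F. x i / s) = 1" using s0 unfolding s_def by (simp add: sum_divide_distrib[symmetric])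
          show "\<And>i. i \<in> F \<Longrightarrow> 0 \<le> x i / s" using xpos s0 by (simp add: less_imp_le)
          show "\<And>i. i \<in> F \<Longrightarrow> \<rho> i \<in> G" using all unfolding F_def by auto
        qed
        have eq: "s *\<^sub>R (\<Sum>i\<in>F. (x i / s) *\<^sub>R \<rho> i) = S n"
          unfolding SF scaleR_sum_right using s0 by simp
        have "s *\<^sub>R (\<Sum>i\<in>F. (x i / s) *\<^sub>R \<rho> i) \<in> PDO" unfolding eq using family_seq(3)[OF adm, of n] unfolding S_def g_def .
        then show ?thesis
          using sc[unfolded scalar_closed_def, rule_format, of "\<Sum>i\<in>F. (x i / s) *\<^sub>R \<rho> i" s] cG s0
          unfolding eq by simp
      qed
    qed
    show "\<sigma> \<in> G"
      using oc[unfolded omega_cpo_def, rule_format, of S \<sigma>] SG fs(4) family_seq(2)[OF adm] unfolding S_def g_def by simp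
  qed
qed

lemma ws_iff_P2:
  fixes \<alpha> :: "('v::finite) qop set \<Rightarrow> 'a::complete_lattice" and \<gamma> :: "'a \<Rightarrow> 'v qop set"
  assumes emb: "galois_embedding \<alpha> \<gamma>"
  shows "well_structured \<alpha> \<gamma> \<longleftrightarrow> (\<forall>a I x \<rho> \<sigma>. admissible_family I x \<rho> \<sigma> \<longrightarrow>
                  (\<sigma> \<in> \<gamma> a \<longleftrightarrow> (\<forall>i\<in>I. \<rho> i \<in> \<gamma> a)))"
proof -
  have gc: "\<And>\<tau> a. \<tau> \<in> PDO \<Longrightarrow> \<tau> \<in> \<gamma> a \<longleftrightarrow> \<alpha> {\<tau>} \<le> a"
    using emb unfolding galois_embedding_def galois_connection_def by auto
  show ?thesis
  proof
    assume ws: "well_structured \<alpha> \<gamma>"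
    show "\<forall>a I x \<rho> \<sigma>. admissible_family I x \<rho> \<sigma> \<longrightarrow> (\<sigma> \<in> \<gamma> a \<longleftrightarrow> (\<forall>i\<in>I. \<rho> i \<in> \<gamma> a))"
    proof (intro allI impI)
      fix a I x and \<rho> :: "nat \<Rightarrow> 'v qop" and \<sigma> :: "'v qop" assume adm: "admissible_family I x \<rho> \<sigma>"
      have fam: "\<And>i. i \<in> I \<Longrightarrow> \<rho> i \<in> PDO" and sP: "\<sigma> \<in> PDO"
        using adm unfolding admissible_family_def by auto
      have eq: "\<alpha> {\<sigma>} = (SUP i\<in>I. \<alpha> {\<rho> i})" using ws adm unfolding well_structured_def by blast
      have "\<sigma> \<in> \<gamma> a \<longleftrightarrow> (SUP i\<in>I. \<alpha> {\<rho> i}) \<le> a" using gc[OF sP] eq by simp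
      also have "\<dots> \<longleftrightarrow> (\<forall>i\<in>I. \<alpha> {\<rho> i} \<le> a)" by (rule SUP_le_iff)
      also have "\<dots> \<longleftrightarrow> (\<forall>i\<in>I. \<rho> i \<in> \<gamma> a)" using gc fam by blast
      finally show "\<sigma> \<in> \<gamma> a \<longleftrightarrow> (\<forall>i\<in>I. \<rho> i \<in> \<gamma> a)" .
    qed
  next
    assume P2: "\<forall>a I x \<rho> \<sigma>. admissible_family I x \<rho> \<sigma> \<longrightarrow> (\<sigma> \<in> \<gamma> a \<longleftrightarrow> (\<forall>i\<in>I. \<rho> i \<in> \<gamma> a))"
    show "well_structured \<alpha> \<gamma>"
      unfolding well_structured_def
    proof (intro conjI emb allI impI)
      fix I x and \<rho> :: "nat \<Rightarrow> 'v qop" and \<sigma> :: "'v qop" assume adm: "admissible_family I x \<rho> \<sigma>"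
      have fam: "\<And>i. i \<in> I \<Longrightarrow> \<rho> i \<in> PDO" and sP: "\<sigma> \<in> PDO"
        using adm unfolding admissible_family_def by auto
      have iff: "\<And>a. \<alpha> {\<sigma>} \<le> a \<longleftrightarrow> (\<forall>i\<in>I. \<alpha> {\<rho> i} \<le> a)"
        using P2 adm gc sP fam by blast
      show "\<alpha> {\<sigma>} = (SUP i\<in>I. \<alpha> {\<rho> i})"
      proof (rule antisym)
        show "\<alpha> {\<sigma>} \<le> (SUP i\<in>I. \<alpha> {\<rho> i})" using iff[of "SUP i\<in>I. \<alpha> {\<rho> i}"] by (auto intro: SUP_upper)
        show "(SUP i\<in>I. \<alpha> {\<rho> i}) \<le> \<alpha> {\<sigma>}" using iff[of "\<alpha> {\<sigma>}"] by (simp add: SUP_le_iff)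
      qed
    qed
  qed
qed

theorem mainTheorem1:
  fixes \<alpha> :: "('v::finite) qop set \<Rightarrow> 'a::complete_lattice"
    and \<gamma> :: "'a \<Rightarrow> 'v qop set"
  assumes gamma_Q: "\<And>a. \<gamma> a \<subseteq> PDO"
    and alpha_mono: "\<And>S T. S \<subseteq> T \<Longrightarrow> T \<subseteq> PDO \<Longrightarrow> \<alpha> S \<le> \<alpha> T"
    and gamma_mono: "mono \<gamma>"
    and emb: "galois_embedding \<alpha> \<gamma>"
  shows "(well_structured \<alpha> \<gamma>
           \<longleftrightarrow> (\<forall>a I x \<rho> \<sigma>. admissible_family I x \<rho> \<sigma> \<longrightarrow>
                  (\<sigma> \<in> \<gamma> a \<longleftrightarrow> (\<forall>i\<in>I. \<rho> i \<in> \<gamma> a))))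
       \<and> (well_structured \<alpha> \<gamma>
           \<longleftrightarrow> (\<forall>a. convex (\<gamma> a) \<and> omega_cpo (\<gamma> a) \<and> down_closed (\<gamma> a)
                    \<and> scalar_closed (\<gamma> a)))"
proof -
  have A: "well_structured \<alpha> \<gamma> \<longleftrightarrow> (\<forall>a I x \<rho> \<sigma>. admissible_family I x \<rho> \<sigma> \<longrightarrow>
                  (\<sigma> \<in> \<gamma> a \<longleftrightarrow> (\<forall>i\<in>I. \<rho> i \<in> \<gamma> a)))"
    by (rule ws_iff_P2[OF emb])
  have B: "(\<forall>a I x \<rho> \<sigma>. admissible_family I x \<rho> \<sigma> \<longrightarrow> (\<sigma> \<in> \<gamma> a \<longleftrightarrow> (\<forall>i\<in>I. \<rho> i \<in> \<gamma> a)))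
     \<longleftrightarrow> (\<forall>a. convex (\<gamma> a) \<and> omega_cpo (\<gamma> a) \<and> down_closed (\<gamma> a) \<and> scalar_closed (\<gamma> a))"
  proof
    assume P2: "\<forall>a I x \<rho> \<sigma>. admissible_family I x \<rho> \<sigma> \<longrightarrow> (\<sigma> \<in> \<gamma> a \<longleftrightarrow> (\<forall>i\<in>I. \<rho> i \<in> \<gamma> a))"
    show "\<forall>a. convex (\<gamma> a) \<and> omega_cpo (\<gamma> a) \<and> down_closed (\<gamma> a) \<and> scalar_closed (\<gamma> a)"
    proof
      fix a show "convex (\<gamma> a) \<and> omega_cpo (\<gamma> a) \<and> down_closed (\<gamma> a) \<and> scalar_closed (\<gamma> a)"
        by (rule P2_imp_P3[OF gamma_Q]) (use P2 in blast)
    qed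
  next
    assume P3: "\<forall>a. convex (\<gamma> a) \<and> omega_cpo (\<gamma> a) \<and> down_closed (\<gamma> a) \<and> scalar_closed (\<gamma> a)"
    show "\<forall>a I x \<rho> \<sigma>. admissible_family I x \<rho> \<sigma> \<longrightarrow> (\<sigma> \<in> \<gamma> a \<longleftrightarrow> (\<forall>i\<in>I. \<rho> i \<in> \<gamma> a))"
    proof (intro allI impI)
      fix a I x and \<rho> :: "nat \<Rightarrow> 'v qop" and \<sigma> :: "'v qop" assume adm: "admissible_family I x \<rho> \<sigma>"
      show "\<sigma> \<in> \<gamma> a \<longleftrightarrow> (\<forall>i\<in>I. \<rho> i \<in> \<gamma> a)"
        using P3_imp_P2[OF gamma_Q _ _ _ _ adm] P3 by blast
    qed
  qed
  show ?thesis using A B by blast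
qed

end
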